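(* There is a universal constant $C>0$ such that for every $n\geq2$ and $V>0$, $$\mathrm{GW}(K_n^0(V)) = \mathbb{E}\sup_{\theta:\ \mathrm{TV}(\theta)\le V,\ \overline\theta = 0}\langle Z,\theta\rangle \leq C\big(V\log n\,\log(1 + 2Vn^2) + 1\big).$$
   Context: $K_n^0(V) = \{\theta\in\mathbb{R}^{n\times n}: \mathrm{TV}(\theta)\le V,\ \overline\theta=0\}$, where $\mathrm{TV}(\theta)$ is the unnormalized total variation (sum of $|\theta_u-\theta_v|$ over horizontally/vertically adjacent entries) and $\overline\theta = n^{-2}\sum_{i,j}\theta_{ij}$. For $A\subseteq\mathbb{R}^{n\times n}$, $\mathrm{GW}(A) = \mathbb{E}\sup_{v\in A}\langle Z,v\rangle$ with $Z$ an $n\times n$ matrix of i.i.d. standard normals and $\langle\cdot,\cdot\rangle$ the entrywise inner product. *)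

theory Defs
  imports "HOL-Probability.Probability"
begin

text \<open>n x n matrices are functions on index pairs (i,j) with 0 <= i,j < n,
  extended by zero outside the index square.\<close>

definition grid :: "nat \<Rightarrow> (nat \<times> nat) set" where
  "grid n = {..<n} \<times> {..<n}"

definition TV :: "nat \<Rightarrow> (nat \<times> nat \<Rightarrow> real) \<Rightarrow> real" where
  "TV n \<theta> =
     (\<Sum>i<n. \<Sum>j<n - 1. \<bar>\<theta> (i, Suc j) - \<theta> (i, j)\<bar>)
   + (\<Sum>i<n - 1. \<Sum>j<n. \<bar>\<theta> (Suc i, j) - \<theta> (i, j)\<bar>)"

definition mean :: "nat \<Rightarrow> (nat \<times> nat \<Rightarrow> real) \<Rightarrow> real" where
  "mean n \<theta> = (\<Sum>p\<in>grid n. \<theta> p) / (real n)^2"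

definition inner_mat :: "nat \<Rightarrow> (nat \<times> nat \<Rightarrow> real) \<Rightarrow> (nat \<times> nat \<Rightarrow> real) \<Rightarrow> real" where
  "inner_mat n Z v = (\<Sum>p\<in>grid n. Z p * v p)"

definition K0 :: "nat \<Rightarrow> real \<Rightarrow> (nat \<times> nat \<Rightarrow> real) set" where
  "K0 n V = {\<theta>. (\<forall>p. p \<notin> grid n \<longrightarrow> \<theta> p = 0) \<and> TV n \<theta> \<le> V \<and> mean n \<theta> = 0}"

definition gauss_mat :: "nat \<Rightarrow> (nat \<times> nat \<Rightarrow> real) measure" where
  "gauss_mat n = PiM (grid n) (\<lambda>_. density lborel std_normal_density)"

text \<open>Gaussian width, as an extended nonnegative value (the sup is >= 0 whenever 0 is in A).\<close>
definition GW :: "nat \<Rightarrow> (nat \<times> nat \<Rightarrow> real) set \<Rightarrow> ennreal" where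
  "GW n A = (\<integral>\<^sup>+ Z. (SUP v\<in>A. ennreal (inner_mat n Z v)) \<partial>gauss_mat n)"

end

theory Submission
  imports Defs "HOL-Analysis.Harmonic_Numbers"
begin


lemma normal_density_shift:
  "std_normal_density x * exp (t * x) = exp (t^2/2) * normal_density t 1 x"
  unfolding normal_density_def by (simp add: exp_add[symmetric] power2_eq_square field_simps)

lemma nn_integral_normal_density: "(\<integral>\<^sup>+ x. ennreal (normal_density \<mu> 1 x) \<partial>lborel) = 1"
  by (subst nn_integral_eq_integral) auto

lemma mgf_std_normal:
  "(\<integral>\<^sup>+ x. ennreal (exp (t * x)) \<partial>density lborel std_normal_density) = ennreal (exp (t^2/2))"
proof -
  have "(\<integral>\<^sup>+ x. ennreal (exp (t * x)) \<partial>density lborel std_normal_density)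
     = (\<integral>\<^sup>+ x. ennreal (std_normal_density x) * ennreal (exp (t * x)) \<partial>lborel)"
    by (subst nn_integral_density) auto
  also have "\<dots> = (\<integral>\<^sup>+ x. ennreal (exp (t^2/2)) * ennreal (normal_density t 1 x) \<partial>lborel)"
    by (simp add: ennreal_mult'[symmetric] normal_density_shift)
  also have "\<dots> = ennreal (exp (t^2/2))"
    by (subst nn_integral_cmult) (auto simp: nn_integral_normal_density)
  finally show ?thesis .
qed

abbreviation "stdN \<equiv> density lborel std_normal_density"

interpretation stdN_prod: product_sigma_finite "\<lambda>_::nat\<times>nat. stdN"
  unfolding product_sigma_finite_def
  by (simp add: prob_space_imp_sigma_finite prob_space_normal_density)

lemma mgf_block:
  assumes "b \<subseteq> grid n"
  shows "(\<integral>\<^sup>+ Z. ennreal (exp (c * (\<Sum>p\<in>b. Z p))) \<partial>gauss_mat n) = ennreal (exp (real (card b) * c^2/2))"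
proof -
  have fin: "finite (grid n)" by (simp add: grid_def)
  have "(\<integral>\<^sup>+ Z. ennreal (exp (c * (\<Sum>p\<in>b. Z p))) \<partial>gauss_mat n)
     = (\<integral>\<^sup>+ Z. (\<Prod>p\<in>grid n. (\<lambda>p x. if p \<in> b then ennreal (exp (c * x)) else 1) p (Z p)) \<partial>gauss_mat n)"
  proof (rule nn_integral_cong)
    fix Z
    have "exp (c * (\<Sum>p\<in>b. Z p)) = (\<Prod>p\<in>b. exp (c * Z p))"
      using finite_subset[OF assms fin] by (simp add: sum_distrib_left exp_sum)
    hence "ennreal (exp (c * (\<Sum>p\<in>b. Z p))) = (\<Prod>p\<in>b. ennreal (exp (c * Z p)))"
      by (simp add: prod_ennreal)
    also have "\<dots> = (\<Prod>p\<in>grid n. (if p \<in> b then ennreal (exp (c * Z p)) else 1))"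
      using fin assms by (simp add: prod.If_cases Int_absorb1)
    finally show "ennreal (exp (c * (\<Sum>p\<in>b. Z p))) = (\<Prod>p\<in>grid n. (\<lambda>p x. if p \<in> b then ennreal (exp (c * x)) else 1) p (Z p))"
      by simp
  qed
  also have "\<dots> = (\<Prod>p\<in>grid n. integral\<^sup>N stdN (\<lambda>x. if p \<in> b then ennreal (exp (c * x)) else 1))"
    unfolding gauss_mat_def
    by (rule stdN_prod.product_nn_integral_prod[OF fin]) auto
  also have "\<dots> = (\<Prod>p\<in>grid n. if p \<in> b then ennreal (exp (c^2/2)) else 1)"
  proof (rule prod.cong)
    fix p
    interpret prob_space stdN by (simp add: prob_space_normal_density)
    show "integral\<^sup>N stdN (\<lambda>x. if p \<in> b then ennreal (exp (c * x)) else 1) = (if p \<in> b then ennreal (exp (c^2/2)) else 1)"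
      using emeasure_space_1 by (cases "p \<in> b") (auto simp: mgf_std_normal)
  qed simp
  also have "\<dots> = (\<Prod>p\<in>b. ennreal (exp (c^2/2)))"
    using fin assms by (simp add: prod.If_cases Int_absorb1)
  also have "\<dots> = ennreal (exp (real (card b) * c^2/2))"
    by (simp add: ennreal_power exp_of_nat_mult[symmetric] mult.assoc)
  finally show ?thesis .
qed



definition lo :: "nat \<Rightarrow> nat \<Rightarrow> nat \<Rightarrow> nat" where "lo n d t = (t * n) div 2^d"
definition Iv :: "nat \<Rightarrow> nat \<Rightarrow> nat \<Rightarrow> nat set" where "Iv n d t = {lo n d t ..< lo n d (Suc t)}"
definition Bk :: "nat \<Rightarrow> nat \<Rightarrow> nat \<Rightarrow> nat \<Rightarrow> (nat \<times> nat) set" where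
  "Bk n d t u = Iv n d t \<times> Iv n d u"
definition hE :: "nat \<Rightarrow> (nat \<times> nat \<Rightarrow> real) \<Rightarrow> nat \<times> nat \<Rightarrow> real" where
  "hE n \<theta> p = (if Suc (snd p) < n then \<bar>\<theta> (fst p, Suc (snd p)) - \<theta> p\<bar> else 0)"
definition vE :: "nat \<Rightarrow> (nat \<times> nat \<Rightarrow> real) \<Rightarrow> nat \<times> nat \<Rightarrow> real" where
  "vE n \<theta> p = (if Suc (fst p) < n then \<bar>\<theta> (Suc (fst p), snd p) - \<theta> p\<bar> else 0)"
definition Wt :: "nat \<Rightarrow> (nat \<times> nat \<Rightarrow> real) \<Rightarrow> (nat \<times> nat) set \<Rightarrow> real" where
  "Wt n \<theta> P = (\<Sum>p\<in>P. hE n \<theta> p + vE n \<theta> p)"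
definition av :: "(nat \<times> nat \<Rightarrow> real) \<Rightarrow> (nat \<times> nat) set \<Rightarrow> real" where
  "av \<theta> P = (\<Sum>p\<in>P. \<theta> p) / real (card P)"

lemma hE_nonneg: "hE n \<theta> p \<ge> 0" by (simp add: hE_def)
lemma vE_nonneg: "vE n \<theta> p \<ge> 0" by (simp add: vE_def)
lemma Wt_nonneg: "Wt n \<theta> P \<ge> 0"
  unfolding Wt_def by (intro sum_nonneg add_nonneg_nonneg hE_nonneg vE_nonneg)

lemma sum_if_last: "(\<Sum>j<n. if Suc j < n then f j else 0) = (\<Sum>j<n - 1. f j :: real)"
  by (cases n) (auto intro!: sum.cong)

lemma TV_eq: "TV n \<theta> = Wt n \<theta> (grid n)"
proof -
  have "Wt n \<theta> (grid n) = (\<Sum>i<n. \<Sum>j<n. hE n \<theta> (i,j)) + (\<Sum>i<n. \<Sum>j<n. vE n \<theta> (i,j))"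
    unfolding Wt_def grid_def sum.distrib by (simp add: sum.cartesian_product)
  also have "(\<Sum>i<n. \<Sum>j<n. hE n \<theta> (i,j)) = (\<Sum>i<n. \<Sum>j<n - 1. \<bar>\<theta> (i, Suc j) - \<theta> (i, j)\<bar>)"
    unfolding hE_def by (simp add: sum_if_last)
  also have "(\<Sum>i<n. \<Sum>j<n. vE n \<theta> (i,j)) = (\<Sum>i<n. if Suc i < n then (\<Sum>j<n. \<bar>\<theta> (Suc i, j) - \<theta> (i, j)\<bar>) else 0)"
    unfolding vE_def by (auto intro!: sum.cong)
  also have "\<dots> = (\<Sum>i<n - 1. \<Sum>j<n. \<bar>\<theta> (Suc i, j) - \<theta> (i, j)\<bar>)"
    by (rule sum_if_last)
  finally show ?thesis unfolding TV_def by simp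
qed

lemma lo_mono: "t \<le> t' \<Longrightarrow> lo n d t \<le> lo n d t'"
  unfolding lo_def by (intro div_le_mono mult_le_mono1)

lemma lo_0[simp]: "lo n d 0 = 0" by (simp add: lo_def)
lemma lo_top[simp]: "lo n d (2^d) = n" by (simp add: lo_def)

lemma lo_double: "lo n (Suc d) (2 * T) = lo n d T"
  unfolding lo_def by (simp add: mult.assoc div_mult_mult1)

lemma sum_intervals:
  assumes "\<And>t t'. t \<le> t' \<Longrightarrow> l t \<le> (l t' :: nat)"
  shows "(\<Sum>t<k. sum f {l t..<l (Suc t)}) = sum f {l 0..<l k}"
proof (induction k)
  case (Suc k)
  show ?case using Suc assms[of 0 k] assms[of k "Suc k"]
    by (simp add: sum.atLeastLessThan_concat)
qed simp

lemma partition1: "(\<Sum>t<2^d. \<Sum>i\<in>Iv n d t. f i) = (\<Sum>i<n. f i)"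
  unfolding Iv_def using sum_intervals[of "lo n d" f "2^d"] lo_mono
  by (simp add: atLeast0LessThan)

lemma partition2: "(\<Sum>t<2^d. \<Sum>u<2^d. \<Sum>p\<in>Bk n d t u. g p) = (\<Sum>p\<in>grid n. g p)"
proof -
  have "(\<Sum>t<2^d. \<Sum>u<2^d. \<Sum>p\<in>Bk n d t u. g p) = (\<Sum>t<2^d. \<Sum>u<2^d. \<Sum>i\<in>Iv n d t. \<Sum>j\<in>Iv n d u. g (i,j))"
    unfolding Bk_def by (simp add: sum.cartesian_product Iv_def)
  also have "\<dots> = (\<Sum>t<2^d. \<Sum>i\<in>Iv n d t. \<Sum>u<2^d. \<Sum>j\<in>Iv n d u. g (i,j))"
    by (rule sum.cong[OF refl], rule sum.swap)
  also have "\<dots> = (\<Sum>i<n. \<Sum>j<n. g (i,j))"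
    by (simp add: partition1)
  also have "\<dots> = (\<Sum>p\<in>grid n. g p)"
    unfolding grid_def by (simp add: sum.cartesian_product)
  finally show ?thesis .
qed

lemma split_Iv: "(\<Sum>i\<in>Iv n d T. f i) = (\<Sum>a<2. \<Sum>i\<in>Iv n (Suc d) (2*T+a). f i)"
proof -
  have e1: "lo n (Suc d) (2*T) = lo n d T" by (rule lo_double)
  have e2: "lo n (Suc d) (Suc (Suc (2*T))) = lo n d (Suc T)" using lo_double[of n d "Suc T"] by simp
  have m1: "lo n (Suc d) (2*T) \<le> lo n (Suc d) (Suc (2*T))" by (rule lo_mono) simp
  have m2: "lo n (Suc d) (Suc (2*T)) \<le> lo n (Suc d) (Suc (Suc (2*T)))" by (rule lo_mono) simp
  have "(\<Sum>a<2. \<Sum>i\<in>Iv n (Suc d) (2*T+a). f i)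
      = sum f {lo n (Suc d) (2*T)..<lo n (Suc d) (Suc (2*T))} + sum f {lo n (Suc d) (Suc (2*T))..<lo n (Suc d) (Suc (Suc (2*T)))}"
    unfolding Iv_def by (simp add: numeral_2_eq_2)
  also have "\<dots> = sum f {lo n (Suc d) (2*T)..<lo n (Suc d) (Suc (Suc (2*T)))}"
    using m1 m2 by (rule sum.atLeastLessThan_concat)
  also have "\<dots> = (\<Sum>i\<in>Iv n d T. f i)" unfolding Iv_def e1 e2 ..
  finally show ?thesis by simp
qed

lemma sum_even_odd: "(\<Sum>t<2*(k::nat). g t) = (\<Sum>T<k. \<Sum>a<2. g (2*T+a) :: real)"
  by (induction k) (simp_all add: numeral_2_eq_2 add.assoc)

lemma sum_lt2: "(\<Sum>a<(2::nat). h a) = h 0 + (h 1 :: 'a::comm_monoid_add)"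
proof -
  have "{..<(2::nat)} = {0,1}" by auto
  then show ?thesis by simp
qed

lemma sum_even_odd2: "(\<Sum>t<2*(k::nat). g t) = (\<Sum>T<k. g (2*T) + g (Suc (2*T)) :: real)"
  using sum_even_odd[where k=k and g=g] by (simp add: sum_lt2)

lemma split_Iv2: "(\<Sum>i\<in>Iv n d T. f i) = (\<Sum>i\<in>Iv n (Suc d) (2*T). f i) + (\<Sum>i\<in>Iv n (Suc d) (Suc (2*T)). f i)"
  using split_Iv[where n=n and d=d and T=T and f=f] by (simp add: sum_lt2)

lemma sum_Bk: "(\<Sum>p\<in>Bk n d t u. g p) = (\<Sum>i\<in>Iv n d t. \<Sum>j\<in>Iv n d u. g (i,j))"
  unfolding Bk_def by (simp add: sum.cartesian_product Iv_def)

lemma block_split: "(\<Sum>p\<in>Bk n d T U. g p :: real) =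
   (\<Sum>p\<in>Bk n (Suc d) (2*T) (2*U). g p) + (\<Sum>p\<in>Bk n (Suc d) (2*T) (Suc (2*U)). g p)
 + (\<Sum>p\<in>Bk n (Suc d) (Suc (2*T)) (2*U). g p) + (\<Sum>p\<in>Bk n (Suc d) (Suc (2*T)) (Suc (2*U)). g p)"
proof -
  define h where "h i = (\<Sum>j\<in>Iv n (Suc d) (2*U). g (i,j)) + (\<Sum>j\<in>Iv n (Suc d) (Suc (2*U)). g (i,j))" for i
  have "(\<Sum>p\<in>Bk n d T U. g p) = (\<Sum>i\<in>Iv n d T. \<Sum>j\<in>Iv n d U. g (i,j))" by (rule sum_Bk)
  also have "\<dots> = (\<Sum>i\<in>Iv n d T. h i)"
    unfolding h_def by (rule sum.cong[OF refl], rule split_Iv2)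
  also have "\<dots> = (\<Sum>i\<in>Iv n (Suc d) (2*T). h i) + (\<Sum>i\<in>Iv n (Suc d) (Suc (2*T)). h i)"
    by (rule split_Iv2)
  finally show ?thesis unfolding h_def sum.distrib sum_Bk by (simp only: add.assoc)
qed

definition Sd :: "nat \<Rightarrow> (nat \<times> nat \<Rightarrow> real) \<Rightarrow> (nat \<times> nat \<Rightarrow> real) \<Rightarrow> nat \<Rightarrow> real" where
  "Sd n Z \<theta> d = (\<Sum>t<2^d. \<Sum>u<2^d. (\<Sum>p\<in>Bk n d t u. Z p) * av \<theta> (Bk n d t u))"

lemma step_eq: "Sd n Z \<theta> (Suc d) - Sd n Z \<theta> d =
  (\<Sum>t<2^Suc d. \<Sum>u<2^Suc d. (\<Sum>p\<in>Bk n (Suc d) t u. Z p) *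
      (av \<theta> (Bk n (Suc d) t u) - av \<theta> (Bk n d (t div 2) (u div 2))))"
proof -
  define zs where "zs t u = (\<Sum>p\<in>Bk n (Suc d) t u. Z p)" for t u
  define a where "a T U = av \<theta> (Bk n d T U)" for T U
  have inner: "(\<Sum>u<2*2^d. zs t u * a T (u div 2)) = (\<Sum>U<2^d. (zs t (2*U) + zs t (Suc (2*U))) * a T U)" for t T
    by (simp add: sum_even_odd2 distrib_right)
  have "(\<Sum>t<2*2^d. \<Sum>u<2*2^d. zs t u * a (t div 2) (u div 2))
     = (\<Sum>T<2^d. (\<Sum>u<2*2^d. zs (2*T) u * a T (u div 2)) + (\<Sum>u<2*2^d. zs (Suc (2*T)) u * a T (u div 2)))"
    by (simp add: sum_even_odd2)
  also have "\<dots> = (\<Sum>T<2^d. \<Sum>U<2^d. (zs (2*T) (2*U) + zs (2*T) (Suc (2*U)) + zs (Suc (2*T)) (2*U) + zs (Suc (2*T)) (Suc (2*U))) * a T U)"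
    unfolding inner sum.distrib[symmetric] by (simp add: algebra_simps)
  also have "\<dots> = (\<Sum>T<2^d. \<Sum>U<2^d. (\<Sum>p\<in>Bk n d T U. Z p) * a T U)"
  proof (intro sum.cong refl)
    fix T U show "(zs (2*T) (2*U) + zs (2*T) (Suc (2*U)) + zs (Suc (2*T)) (2*U) + zs (Suc (2*T)) (Suc (2*U))) * a T U = (\<Sum>p\<in>Bk n d T U. Z p) * a T U"
      unfolding zs_def using block_split[where n=n and d=d and T=T and U=U and g=Z] by simp
  qed
  finally have key: "(\<Sum>t<2^Suc d. \<Sum>u<2^Suc d. zs t u * a (t div 2) (u div 2)) = Sd n Z \<theta> d"
    unfolding Sd_def a_def by simp
  show ?thesis
    unfolding right_diff_distrib sum_subtractf key[symmetric]
    by (simp add: Sd_def zs_def a_def)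
qed

lemma abs_path: "j \<le> j' \<Longrightarrow> \<bar>f j' - f j\<bar> \<le> (\<Sum>k\<in>{j..<j'}. \<bar>f (Suc k) - f k\<bar> :: real)"
proof (induction j' rule: dec_induct)
  case (step k)
  have "\<bar>f (Suc k) - f j\<bar> \<le> \<bar>f k - f j\<bar> + \<bar>f (Suc k) - f k\<bar>" by simp
  also have "\<dots> \<le> (\<Sum>k\<in>{j..<k}. \<bar>f (Suc k) - f k\<bar>) + \<bar>f (Suc k) - f k\<bar>" using step by simp
  finally show ?case using step by simp
qed simp

lemma row_bound:
  assumes "j \<in> {c1..<c2}" "j' \<in> {c1..<c2}" "c2 \<le> n"
  shows "\<bar>\<theta> (i,j) - \<theta> (i,j')\<bar> \<le> (\<Sum>k\<in>{c1..<c2}. hE n \<theta> (i,k))"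
proof -
  have gen: "\<bar>\<theta> (i,y) - \<theta> (i,x)\<bar> \<le> (\<Sum>k\<in>{c1..<c2}. hE n \<theta> (i,k))"
    if "x \<le> y" "x \<in> {c1..<c2}" "y \<in> {c1..<c2}" for x y
  proof -
    have "\<bar>\<theta> (i,y) - \<theta> (i,x)\<bar> \<le> (\<Sum>k\<in>{x..<y}. \<bar>\<theta> (i, Suc k) - \<theta> (i, k)\<bar>)"
      using abs_path[of x y "\<lambda>k. \<theta> (i,k)"] that by simp
    also have "\<dots> = (\<Sum>k\<in>{x..<y}. hE n \<theta> (i,k))"
      using that assms(3) by (intro sum.cong) (auto simp: hE_def)
    also have "\<dots> \<le> (\<Sum>k\<in>{c1..<c2}. hE n \<theta> (i,k))"
      using that by (intro sum_mono2) (auto simp: hE_nonneg)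
    finally show ?thesis .
  qed
  show ?thesis
  proof (cases "j \<le> j'")
    case True then show ?thesis using gen[of j j'] assms by (simp add: abs_minus_commute)
  next
    case False then show ?thesis using gen[of j' j] assms by simp
  qed
qed

lemma col_bound:
  assumes "i \<in> {a1..<a2}" "i' \<in> {a1..<a2}" "a2 \<le> n"
  shows "\<bar>\<theta> (i,j) - \<theta> (i',j)\<bar> \<le> (\<Sum>k\<in>{a1..<a2}. vE n \<theta> (k,j))"
proof -
  have gen: "\<bar>\<theta> (y,j) - \<theta> (x,j)\<bar> \<le> (\<Sum>k\<in>{a1..<a2}. vE n \<theta> (k,j))"
    if "x \<le> y" "x \<in> {a1..<a2}" "y \<in> {a1..<a2}" for x y
  proof -
    have "\<bar>\<theta> (y,j) - \<theta> (x,j)\<bar> \<le> (\<Sum>k\<in>{x..<y}. \<bar>\<theta> (Suc k, j) - \<theta> (k, j)\<bar>)"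
      using abs_path[of x y "\<lambda>k. \<theta> (k,j)"] that by simp
    also have "\<dots> = (\<Sum>k\<in>{x..<y}. vE n \<theta> (k,j))"
      using that assms(3) by (intro sum.cong) (auto simp: vE_def)
    also have "\<dots> \<le> (\<Sum>k\<in>{a1..<a2}. vE n \<theta> (k,j))"
      using that by (intro sum_mono2) (auto simp: vE_nonneg)
    finally show ?thesis .
  qed
  show ?thesis
  proof (cases "i \<le> i'")
    case True then show ?thesis using gen[of i i'] assms by (simp add: abs_minus_commute)
  next
    case False then show ?thesis using gen[of i' i] assms by simp
  qed
qed

lemma avg_bound:
  fixes \<theta> :: "nat \<times> nat \<Rightarrow> real"
  assumes fin: "finite A" "finite J" and sub: "A' \<subseteq> A" "J' \<subseteq> J" and ne: "A' \<noteq> {}" "J' \<noteq> {}"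
    and H: "\<And>q1 q2 r1 r2. q1 \<in> A \<Longrightarrow> q2 \<in> J \<Longrightarrow> r1 \<in> A \<Longrightarrow> r2 \<in> J \<Longrightarrow>
          \<bar>\<theta> (q1,q2) - \<theta> (r1,r2)\<bar> \<le> H q1 + Vc r2"
  shows "\<bar>av \<theta> (A' \<times> J') - av \<theta> (A \<times> J)\<bar> \<le> (\<Sum>i\<in>A'. H i) / card A' + (\<Sum>j\<in>J. Vc j) / card J"
proof -
  define b where "b = A' \<times> J'"
  define P where "P = A \<times> J"
  have finA': "finite A'" and finJ': "finite J'" using fin sub finite_subset by auto
  have cA': "card A' > 0" and cJ': "card J' > 0" using ne finA' finJ' by (auto simp: card_gt_0_iff)
  have cA: "card A > 0" and cJ: "card J > 0" using ne sub fin by (auto simp: card_gt_0_iff)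
  have finb: "finite b" and finP: "finite P" using finA' finJ' fin by (auto simp: b_def P_def)
  have cb: "real (card b) = real (card A') * real (card J')" by (simp add: b_def card_cartesian_product)
  have cP: "real (card P) = real (card A) * real (card J)" by (simp add: P_def card_cartesian_product)
  have cbpos: "real (card b) > 0" and cPpos: "real (card P) > 0" using cb cP cA' cJ' cA cJ by auto
  have eq: "av \<theta> b - av \<theta> P = (\<Sum>q\<in>b. \<Sum>r\<in>P. \<theta> q - \<theta> r) / (real (card b) * real (card P))"
  proof -
    have "(\<Sum>q\<in>b. \<Sum>r\<in>P. \<theta> q - \<theta> r) = real (card P) * (\<Sum>q\<in>b. \<theta> q) - real (card b) * (\<Sum>r\<in>P. \<theta> r)"
      by (simp add: sum_subtractf sum_distrib_left sum_distrib_right mult.commute)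
    then show ?thesis using cbpos cPpos unfolding av_def by (simp add: field_simps)
  qed
  have s1: "(\<Sum>q\<in>b. H (fst q)) = real (card J') * (\<Sum>i\<in>A'. H i)"
    unfolding b_def by (simp add: sum.cartesian_product' sum_distrib_left)
  have s2: "(\<Sum>r\<in>P. Vc (snd r)) = real (card A) * (\<Sum>j\<in>J. Vc j)"
    unfolding P_def by (simp add: sum.cartesian_product')
  have "\<bar>\<Sum>q\<in>b. \<Sum>r\<in>P. \<theta> q - \<theta> r\<bar> \<le> (\<Sum>q\<in>b. \<Sum>r\<in>P. \<bar>\<theta> q - \<theta> r\<bar>)"
    by (rule order_trans[OF sum_abs sum_mono]) (rule sum_abs)
  also have "\<dots> \<le> (\<Sum>q\<in>b. \<Sum>r\<in>P. H (fst q) + Vc (snd r))"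
  proof (intro sum_mono)
    fix q r assume q: "q \<in> b" and r: "r \<in> P"
    obtain q1 q2 where qq: "q = (q1,q2)" by (cases q)
    obtain r1 r2 where rr: "r = (r1,r2)" by (cases r)
    have "q1 \<in> A" "q2 \<in> J" "r1 \<in> A" "r2 \<in> J" using q r sub unfolding qq rr b_def P_def by auto
    then show "\<bar>\<theta> q - \<theta> r\<bar> \<le> H (fst q) + Vc (snd r)" unfolding qq rr using H by simp
  qed
  also have "\<dots> = real (card P) * (\<Sum>q\<in>b. H (fst q)) + real (card b) * (\<Sum>r\<in>P. Vc (snd r))"
    by (simp add: sum.distrib sum_distrib_left mult.commute)
  also have "\<dots> = real (card P) * (real (card J') * (\<Sum>i\<in>A'. H i)) + real (card b) * (real (card A) * (\<Sum>j\<in>J. Vc j))"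
    using s1 s2 by simp
  finally have num: "\<bar>\<Sum>q\<in>b. \<Sum>r\<in>P. \<theta> q - \<theta> r\<bar> \<le>
      real (card P) * (real (card J') * (\<Sum>i\<in>A'. H i)) + real (card b) * (real (card A) * (\<Sum>j\<in>J. Vc j))" .
  have "\<bar>av \<theta> b - av \<theta> P\<bar> = \<bar>\<Sum>q\<in>b. \<Sum>r\<in>P. \<theta> q - \<theta> r\<bar> / (real (card b) * real (card P))"
    unfolding eq by (rule abs_div_pos[symmetric]) (intro mult_pos_pos cbpos cPpos)
  also have "\<dots> \<le> (real (card P) * (real (card J') * (\<Sum>i\<in>A'. H i)) + real (card b) * (real (card A) * (\<Sum>j\<in>J. Vc j))) / (real (card b) * real (card P))"
    using num cbpos cPpos by (intro divide_right_mono) auto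
  also have "\<dots> = (\<Sum>i\<in>A'. H i) / card A' + (\<Sum>j\<in>J. Vc j) / card J"
  proof -
    define x where "x = real (card A')"
    define y where "y = real (card J')"
    define z where "z = real (card A)"
    define w where "w = real (card J)"
    have pos: "x > 0" "y > 0" "z > 0" "w > 0" using cA' cJ' cA cJ by (auto simp: x_def y_def z_def w_def)
    have "(z * w * (y * sum H A') + x * y * (z * sum Vc J)) / (x * y * (z * w)) = sum H A' / x + sum Vc J / w"
      using pos by (simp add: field_simps)
    then show ?thesis unfolding cb cP x_def y_def z_def w_def by simp
  qed
  finally show ?thesis unfolding b_def P_def .
qed


lemma Wt_rect: "Wt n \<theta> (A \<times> J) = (\<Sum>i\<in>A. \<Sum>k\<in>J. hE n \<theta> (i,k)) + (\<Sum>j\<in>J. \<Sum>k\<in>A. vE n \<theta> (k,j))"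
proof -
  have "Wt n \<theta> (A \<times> J) = (\<Sum>i\<in>A. \<Sum>k\<in>J. hE n \<theta> (i,k)) + (\<Sum>i\<in>A. \<Sum>j\<in>J. vE n \<theta> (i,j))"
    unfolding Wt_def sum.distrib by (simp add: sum.cartesian_product')
  also have "(\<Sum>i\<in>A. \<Sum>j\<in>J. vE n \<theta> (i,j)) = (\<Sum>j\<in>J. \<Sum>k\<in>A. vE n \<theta> (k,j))"
    by (rule sum.swap)
  finally show ?thesis .
qed

lemma block_bound:
  fixes m :: real
  assumes sub: "A' \<subseteq> {a1..<a2}" "J' \<subseteq> {c1..<c2}" and le: "a2 \<le> n" "c2 \<le> n"
    and ne: "A' \<noteq> {}" "J' \<noteq> {}" and m: "m > 0" "m \<le> card A'" "m \<le> card {c1..<c2}"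
  shows "\<bar>av \<theta> (A' \<times> J') - av \<theta> ({a1..<a2} \<times> {c1..<c2})\<bar> \<le> Wt n \<theta> ({a1..<a2} \<times> {c1..<c2}) / m"
proof -
  define H where "H i = (\<Sum>k\<in>{c1..<c2}. hE n \<theta> (i,k))" for i
  define Vc where "Vc j = (\<Sum>k\<in>{a1..<a2}. vE n \<theta> (k,j))" for j
  have Hn: "H i \<ge> 0" for i unfolding H_def by (intro sum_nonneg hE_nonneg)
  have Vn: "Vc j \<ge> 0" for j unfolding Vc_def by (intro sum_nonneg vE_nonneg)
  have "\<bar>av \<theta> (A' \<times> J') - av \<theta> ({a1..<a2} \<times> {c1..<c2})\<bar> \<le> (\<Sum>i\<in>A'. H i) / card A' + (\<Sum>j\<in>{c1..<c2}. Vc j) / card {c1..<c2}"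
  proof (rule avg_bound[OF _ _ sub ne])
    fix q1 q2 r1 r2 assume q: "q1 \<in> {a1..<a2}" "q2 \<in> {c1..<c2}" "r1 \<in> {a1..<a2}" "r2 \<in> {c1..<c2}"
    have "\<bar>\<theta> (q1,q2) - \<theta> (r1,r2)\<bar> \<le> \<bar>\<theta> (q1,q2) - \<theta> (q1,r2)\<bar> + \<bar>\<theta> (q1,r2) - \<theta> (r1,r2)\<bar>" by simp
    also have "\<dots> \<le> H q1 + Vc r2"
      unfolding H_def Vc_def by (intro add_mono row_bound col_bound q le)
    finally show "\<bar>\<theta> (q1,q2) - \<theta> (r1,r2)\<bar> \<le> H q1 + Vc r2" .
  qed auto
  also have "\<dots> \<le> (\<Sum>i\<in>{a1..<a2}. H i) / m + (\<Sum>j\<in>{c1..<c2}. Vc j) / m"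
  proof (intro add_mono)
    have "(\<Sum>i\<in>A'. H i) / card A' \<le> (\<Sum>i\<in>A'. H i) / m"
      using m by (intro divide_left_mono sum_nonneg Hn) auto
    also have "\<dots> \<le> (\<Sum>i\<in>{a1..<a2}. H i) / m"
      using m sub by (intro divide_right_mono sum_mono2 Hn) auto
    finally show "(\<Sum>i\<in>A'. H i) / card A' \<le> (\<Sum>i\<in>{a1..<a2}. H i) / m" .
    show "(\<Sum>j\<in>{c1..<c2}. Vc j) / card {c1..<c2} \<le> (\<Sum>j\<in>{c1..<c2}. Vc j) / m"
      using m by (intro divide_left_mono sum_nonneg Vn) auto
  qed
  also have "\<dots> = Wt n \<theta> ({a1..<a2} \<times> {c1..<c2}) / m"
    unfolding Wt_rect H_def Vc_def by (simp add: add_divide_distrib)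
  finally show ?thesis .
qed


lemma Iv_sub: "Iv n (Suc d) t \<subseteq> Iv n d (t div 2)"
proof -
  have "lo n d (t div 2) = lo n (Suc d) (2 * (t div 2))" by (simp add: lo_double)
  also have "\<dots> \<le> lo n (Suc d) t" by (rule lo_mono) simp
  finally have 1: "lo n d (t div 2) \<le> lo n (Suc d) t" .
  have "lo n (Suc d) (Suc t) \<le> lo n (Suc d) (2 * Suc (t div 2))" by (rule lo_mono) presburger
  also have "\<dots> = lo n d (Suc (t div 2))" by (rule lo_double)
  finally have 2: "lo n (Suc d) (Suc t) \<le> lo n d (Suc (t div 2))" .
  show ?thesis unfolding Iv_def using 1 2 by auto
qed

lemma lo_le_n: "t < 2^d \<Longrightarrow> lo n d (Suc t) \<le> n"
  using lo_mono[of "Suc t" "2^d" n d] by simp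

lemma card_Iv: "card (Iv n d t) = lo n d (Suc t) - lo n d t"
  by (simp add: Iv_def)

lemma card_Iv_ge: "n div 2^d \<le> card (Iv n d t)"
proof -
  have "t * n div 2^d + n div 2^d \<le> (t * n + n) div 2^d" unfolding div_add1_eq[of "t*n" n "2^d"] by simp
  then show ?thesis unfolding card_Iv lo_def by (simp add: add.commute)
qed

lemma card_Iv_le: "card (Iv n d t) \<le> n div 2^d + 1"
proof -
  have "(t * n + n) div 2^d \<le> t * n div 2^d + n div 2^d + 1"
  proof -
    have "t * n mod 2^d + n mod 2^d < 2 * 2^d"
      using add_strict_mono[OF mod_less_divisor[of "2^d" "t*n"] mod_less_divisor[of "2^d" n]] by (simp add: mult_2)
    then have "(t * n mod 2^d + n mod 2^d) div 2^d < 2" by (rule less_mult_imp_div_less)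
    then show ?thesis unfolding div_add1_eq[of "t*n" n "2^d"] by simp
  qed
  then show ?thesis unfolding card_Iv lo_def by (simp add: add.commute)
qed

lemma card_Iv_le1: "n \<le> 2^d \<Longrightarrow> card (Iv n d t) \<le> 1"
proof -
  assume a: "n \<le> 2^d"
  have "(t * n + n) div 2^d \<le> (t * n + 2^d) div 2^d" using a by (intro div_le_mono) simp
  also have "\<dots> = t * n div 2^d + 1" by simp
  finally show ?thesis unfolding card_Iv lo_def by (simp add: add.commute)
qed


definition md :: "nat \<Rightarrow> nat \<Rightarrow> real" where "md n d = max 1 (real (n div 2^(Suc d)))"

lemma md_pos: "md n d > 0" by (simp add: md_def)

lemma level_term:
  assumes t: "t < 2^Suc d" and u: "u < 2^Suc d"
  shows "(\<Sum>p\<in>Bk n (Suc d) t u. Z p) * (av \<theta> (Bk n (Suc d) t u) - av \<theta> (Bk n d (t div 2) (u div 2)))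
     \<le> \<bar>\<Sum>p\<in>Bk n (Suc d) t u. Z p\<bar> / md n d * Wt n \<theta> (Bk n d (t div 2) (u div 2))"
proof (cases "Iv n (Suc d) t = {} \<or> Iv n (Suc d) u = {}")
  case True
  then have "Bk n (Suc d) t u = {}" by (auto simp: Bk_def)
  then show ?thesis using Wt_nonneg md_pos by simp
next
  case False
  have t2: "t div 2 < 2^d" and u2: "u div 2 < 2^d" using t u by auto
  have fin: "finite (Iv n (Suc d) t)" "finite (Iv n (Suc d) u)" by (auto simp: Iv_def)
  have c1: "1 \<le> card (Iv n (Suc d) t)" "1 \<le> card (Iv n (Suc d) u)"
    using False fin by (auto simp: Suc_le_eq card_gt_0_iff)
  have mA: "md n d \<le> card (Iv n (Suc d) t)"
    using c1 card_Iv_ge[of n "Suc d" t] unfolding md_def by simp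
  have mJ': "md n d \<le> card (Iv n (Suc d) u)"
    using c1 card_Iv_ge[of n "Suc d" u] unfolding md_def by simp
  have "card (Iv n (Suc d) u) \<le> card (Iv n d (u div 2))"
    by (rule card_mono[OF _ Iv_sub]) (simp add: Iv_def)
  with mJ' have mJ: "md n d \<le> card (Iv n d (u div 2))" by linarith
  have bb: "\<bar>av \<theta> (Bk n (Suc d) t u) - av \<theta> (Bk n d (t div 2) (u div 2))\<bar> \<le> Wt n \<theta> (Bk n d (t div 2) (u div 2)) / md n d"
    unfolding Bk_def
    using block_bound[OF Iv_sub[of n d t, unfolded Iv_def[of n d]] Iv_sub[of n d u, unfolded Iv_def[of n d]]
        lo_le_n[OF t2] lo_le_n[OF u2] _ _ md_pos mA mJ[unfolded Iv_def]] False
    by (simp add: Iv_def)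
  have "(\<Sum>p\<in>Bk n (Suc d) t u. Z p) * (av \<theta> (Bk n (Suc d) t u) - av \<theta> (Bk n d (t div 2) (u div 2)))
      \<le> \<bar>\<Sum>p\<in>Bk n (Suc d) t u. Z p\<bar> * \<bar>av \<theta> (Bk n (Suc d) t u) - av \<theta> (Bk n d (t div 2) (u div 2))\<bar>"
    by (metis abs_ge_self abs_mult)
  also have "\<dots> \<le> \<bar>\<Sum>p\<in>Bk n (Suc d) t u. Z p\<bar> * (Wt n \<theta> (Bk n d (t div 2) (u div 2)) / md n d)"
    by (intro mult_left_mono bb) simp
  finally show ?thesis by simp
qed


lemma sum_div2: "(\<Sum>t<2*k. \<Sum>u<2*k. F (t div 2) (u div 2)) = 4 * (\<Sum>T<(k::nat). \<Sum>U<k. F T U :: real)"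
proof -
  have "(\<Sum>u<2*k. F T (u div 2)) = 2 * (\<Sum>U<k. F T U)" for T
    by (simp add: sum_even_odd2 sum_distrib_left)
  then show ?thesis by (simp add: sum_even_odd2 sum_distrib_left)
qed

lemma level_sum:
  assumes L: "\<And>t u. t < 2^Suc d \<Longrightarrow> u < 2^Suc d \<Longrightarrow> \<bar>\<Sum>p\<in>Bk n (Suc d) t u. Z p\<bar> / md n d \<le> Lb"
  shows "Sd n Z \<theta> (Suc d) - Sd n Z \<theta> d \<le> 4 * Lb * TV n \<theta>"
proof -
  have "Sd n Z \<theta> (Suc d) - Sd n Z \<theta> d \<le> (\<Sum>t<2^Suc d. \<Sum>u<2^Suc d. Lb * Wt n \<theta> (Bk n d (t div 2) (u div 2)))"
    unfolding step_eq
  proof (intro sum_mono)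
    fix t u :: nat assume "t \<in> {..<2^Suc d}" "u \<in> {..<2^Suc d}"
    then have tu: "t < 2^Suc d" "u < 2^Suc d" by auto
    show "(\<Sum>p\<in>Bk n (Suc d) t u. Z p) * (av \<theta> (Bk n (Suc d) t u) - av \<theta> (Bk n d (t div 2) (u div 2)))
        \<le> Lb * Wt n \<theta> (Bk n d (t div 2) (u div 2))"
      using level_term[OF tu, where n=n and Z=Z and \<theta>=\<theta>] mult_right_mono[OF L[OF tu] Wt_nonneg[of n \<theta> "Bk n d (t div 2) (u div 2)"]] by linarith
  qed
  also have "\<dots> = 4 * (\<Sum>T<2^d. \<Sum>U<2^d. Lb * Wt n \<theta> (Bk n d T U))"
    unfolding power_Suc by (rule sum_div2)
  also have "(\<Sum>T<2^d. \<Sum>U<2^d. Lb * Wt n \<theta> (Bk n d T U)) = Lb * TV n \<theta>"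
    unfolding TV_eq Wt_def sum_distrib_left[symmetric] partition2 ..
  finally show ?thesis by simp
qed

lemma small_block:
  assumes "finite A" "finite B" "card A \<le> 1" "card B \<le> 1"
  shows "(\<Sum>p\<in>A \<times> B. Z p) * av \<theta> (A \<times> B) = (\<Sum>p\<in>A \<times> B. Z p * \<theta> p)"
proof (cases "A = {} \<or> B = {}")
  case True then show ?thesis by auto
next
  case False
  then have "card A = 1" "card B = 1" using assms by (auto simp: le_Suc_eq card_0_eq)
  then obtain a b where "A = {a}" "B = {b}" by (auto simp: card_1_singleton_iff)
  then show ?thesis by (simp add: av_def)
qed

lemma det_main:
  assumes D: "n \<le> 2^D" and mean: "mean n \<theta> = 0"
    and L: "\<And>d t u. d < D \<Longrightarrow> t < 2^Suc d \<Longrightarrow> u < 2^Suc d \<Longrightarrow> \<bar>\<Sum>p\<in>Bk n (Suc d) t u. Z p\<bar> / md n d \<le> Lb"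
  shows "inner_mat n Z \<theta> \<le> 4 * real D * Lb * TV n \<theta>"
proof -
  have S0: "Sd n Z \<theta> 0 = 0"
  proof -
    have g: "Bk n 0 0 0 = grid n" by (simp add: Bk_def Iv_def lo_def grid_def atLeast0LessThan)
    have "av \<theta> (grid n) = mean n \<theta>"
      by (simp add: av_def mean_def grid_def card_cartesian_product power2_eq_square)
    then show ?thesis unfolding Sd_def using g mean by simp
  qed
  have SD: "Sd n Z \<theta> D = inner_mat n Z \<theta>"
  proof -
    have "Sd n Z \<theta> D = (\<Sum>t<2^D. \<Sum>u<2^D. \<Sum>p\<in>Bk n D t u. Z p * \<theta> p)"
      unfolding Sd_def Bk_def
      by (intro sum.cong refl small_block card_Iv_le1 D) (auto simp: Iv_def)
    also have "\<dots> = inner_mat n Z \<theta>" unfolding inner_mat_def by (rule partition2)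
    finally show ?thesis .
  qed
  have "inner_mat n Z \<theta> = (\<Sum>d<D. Sd n Z \<theta> (Suc d) - Sd n Z \<theta> d)"
    using SD S0 by (simp add: sum_lessThan_telescope)
  also have "\<dots> \<le> (\<Sum>d<D. 4 * Lb * TV n \<theta>)"
    by (intro sum_mono level_sum L) auto
  also have "\<dots> = 4 * real D * Lb * TV n \<theta>" by simp
  finally show ?thesis .
qed



lemma final_arith:
  assumes n: "n \<ge> (2::nat)" and V: "V > (0::real)"
  shows "V * ln (real n)^2 \<le> V * ln (real n) * ln (1 + 2 * V * (real n)^2) + 1"
proof -
  let ?L = "ln (real n)"
  have L0: "?L > 0" using n by simp
  show ?thesis
  proof (cases "V * ?L^2 \<le> 1")
    case True
    have "0 \<le> V * ?L * ln (1 + 2 * V * (real n)^2)" using V L0 by (intro mult_nonneg_nonneg) auto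
    then show ?thesis using True by linarith
  next
    case False
    have sq: "sqrt (real n) > 0" using n by simp
    have "ln (sqrt (real n) / exp 1) \<le> sqrt (real n) / exp 1 - 1"
      using sq by (intro ln_le_minus_one) simp
    then have "ln (sqrt (real n)) \<le> sqrt (real n) / exp 1"
      using sq by (simp add: ln_div)
    moreover have "ln (sqrt (real n)) = ?L / 2" using n by (simp add: ln_sqrt)
    ultimately have "?L \<le> 2 * sqrt (real n) / exp 1" by (simp add: mult.commute)
    also have "\<dots> \<le> sqrt (real n)"
      using sq exp_ge_add_one_self[of 1] by (simp add: divide_le_eq)
    finally have "?L^2 \<le> real n" using L0 by (metis power_mono less_imp_le real_sqrt_pow2 of_nat_0_le_iff)
    have "1 < V * ?L^2" using False by simp
    then have "real n < V * ?L^2 * real n" using n by simp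
    also have "\<dots> \<le> V * real n * real n" using `?L^2 \<le> real n` V n by (simp add: mult.commute mult.left_commute)
    finally have a: "real n < V * (real n * real n)" by (simp add: mult.assoc)
    have b: "0 \<le> V * (real n * real n)" using V by simp
    have "real n \<le> 1 + 2 * V * (real n)^2" unfolding power2_eq_square mult.assoc using a b by linarith
    then have "?L \<le> ln (1 + 2 * V * (real n)^2)" using n by (intro ln_mono) auto
    then have "V * ?L * ?L \<le> V * ?L * ln (1 + 2 * V * (real n)^2)"
      using V L0 by (intro mult_left_mono) auto
    then show ?thesis by (simp add: power2_eq_square)
  qed
qed

lemma exD: assumes "n \<ge> (2::nat)" shows "\<exists>D. 1 \<le> D \<and> n \<le> 2^D \<and> 2^D < 2*n"
proof -
  obtain e where "2^e < n \<and> n \<le> 2^(e+1)" using ex_power_ivl2[of 2 n] assms by auto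
  then show ?thesis by (intro exI[of _ "Suc e"]) auto
qed

lemma D_bound:
  assumes n: "n \<ge> (2::nat)" and D: "2^D < 2*n"
  shows "real D \<le> 3 * ln (real n)"
proof -
  have "real D * ln 2 = ln (2^D)" by (simp add: ln_realpow)
  also have "\<dots> < ln (2 * real n)"
  proof -
    have "real (2^D) < real (2*n)" using D by (simp only: of_nat_less_iff)
    then have "(2::real)^D < 2 * real n" by simp
    then show ?thesis using n by (subst ln_less_cancel_iff) auto
  qed
  also have "\<dots> = ln 2 + ln (real n)" using n by (simp add: ln_mult)
  finally have 1: "real D * ln 2 < ln 2 + ln (real n)" .
  have l2: "2/3 \<le> ln (2::real)" by (rule ln2_ge_two_thirds)
  have "ln 2 \<le> ln (real n)" using n by (subst ln_le_cancel_iff) auto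
  then have "real D * ln 2 < 2 * ln (real n)" using 1 by linarith
  also have "\<dots> \<le> 3 * ln (real n) * ln 2" using mult_left_mono[OF l2, of "3 * ln (real n)"] `ln 2 \<le> ln (real n)` l2 by simp
  finally show ?thesis using l2 by simp
qed


lemma Bk_sub_grid: "t < 2^d \<Longrightarrow> u < 2^d \<Longrightarrow> Bk n d t u \<subseteq> grid n"
  using lo_le_n[of t d n] lo_le_n[of u d n] by (auto simp: Bk_def Iv_def grid_def)

lemma meas_block:
  assumes "b \<subseteq> grid n"
  shows "(\<lambda>Z. ennreal (exp (c * (\<Sum>p\<in>b. Z p)))) \<in> borel_measurable (gauss_mat n)"
proof -
  have "(\<lambda>Z. \<Sum>p\<in>b. Z p) \<in> borel_measurable (gauss_mat n)"
    unfolding gauss_mat_def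
    by (intro borel_measurable_sum measurable_component_singleton) (use assms in auto)
  moreover have "(\<lambda>x::real. ennreal (exp (c * x))) \<in> borel_measurable borel" by measurable
  ultimately show ?thesis using measurable_compose by fastforce
qed

lemma meas_blocksum:
  assumes "b \<subseteq> grid n"
  shows "(\<lambda>Z. exp (c * (\<Sum>p\<in>b. Z p))) \<in> borel_measurable (gauss_mat n)"
proof -
  have "(\<lambda>Z. \<Sum>p\<in>b. Z p) \<in> borel_measurable (gauss_mat n)"
    unfolding gauss_mat_def
    by (intro borel_measurable_sum measurable_component_singleton) (use assms in auto)
  moreover have "(\<lambda>x::real. exp (c * x)) \<in> borel_measurable borel" by measurable
  ultimately show ?thesis using measurable_compose by fastforce
qed

lemma card_Bk_bound: "real (card (Bk n (Suc d) t u)) \<le> 4 * (md n d)^2"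
proof -
  have c: "real (card (Iv n (Suc d) t)) \<le> 2 * md n d" for t
  proof -
    have "real (card (Iv n (Suc d) t)) \<le> real (n div 2^Suc d) + 1"
      using card_Iv_le[of n "Suc d" t] by linarith
    also have "\<dots> \<le> 2 * md n d" unfolding md_def by linarith
    finally show ?thesis .
  qed
  have "real (card (Bk n (Suc d) t u)) = real (card (Iv n (Suc d) t)) * real (card (Iv n (Suc d) u))"
    by (simp add: Bk_def card_cartesian_product)
  also have "\<dots> \<le> (2 * md n d) * (2 * md n d)"
    using c[of t] c[of u] by (intro mult_mono) auto
  finally show ?thesis by (simp add: power2_eq_square)
qed


lemma ES_bound:
  "(\<integral>\<^sup>+Z. ennreal (\<Sum>d<D. \<Sum>t<2^Suc d. \<Sum>u<2^Suc d.
        exp ((1 / md n d) * (\<Sum>p\<in>Bk n (Suc d) t u. Z p)) + exp ((- 1 / md n d) * (\<Sum>p\<in>Bk n (Suc d) t u. Z p))) \<partial>gauss_mat n)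
   \<le> ennreal (2 * exp 2 * real D * 4^D)"
proof -
  define F where "F d t u c Z = ennreal (exp (c * (\<Sum>p\<in>Bk n (Suc d) t u. Z p)))" for d t u c and Z :: "nat \<times> nat \<Rightarrow> real"
  have meas: "F d t u c \<in> borel_measurable (gauss_mat n)" if "t < 2^Suc d" "u < 2^Suc d" for d t u c
    unfolding F_def by (rule meas_block[OF Bk_sub_grid[OF that]])
  have one: "integral\<^sup>N (gauss_mat n) (F d t u c) \<le> ennreal (exp 2)" if "t < 2^Suc d" "u < 2^Suc d" "c^2 = (1 / md n d)^2" for d t u c
  proof -
    have "integral\<^sup>N (gauss_mat n) (F d t u c) = ennreal (exp (real (card (Bk n (Suc d) t u)) * c^2/2))"
      unfolding F_def by (rule mgf_block[OF Bk_sub_grid[OF that(1,2)]])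
    also have "\<dots> \<le> ennreal (exp 2)"
    proof -
      have m: "md n d > 0" by (rule md_pos)
      have "real (card (Bk n (Suc d) t u)) * c^2/2 = real (card (Bk n (Suc d) t u)) / (2 * (md n d)^2)"
        using that(3) m by (simp add: power_divide)
      also have "\<dots> \<le> 4 * (md n d)^2 / (2 * (md n d)^2)"
        using card_Bk_bound[of n d t u] m by (intro divide_right_mono) auto
      also have "\<dots> = 2" using m by simp
      finally show ?thesis by (intro ennreal_leI) simp
    qed
    finally show ?thesis .
  qed
  have "(\<integral>\<^sup>+Z. ennreal (\<Sum>d<D. \<Sum>t<2^Suc d. \<Sum>u<2^Suc d.
        exp ((1 / md n d) * (\<Sum>p\<in>Bk n (Suc d) t u. Z p)) + exp ((- 1 / md n d) * (\<Sum>p\<in>Bk n (Suc d) t u. Z p))) \<partial>gauss_mat n)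
     = (\<integral>\<^sup>+Z. (\<Sum>d<D. \<Sum>t<2^Suc d. \<Sum>u<2^Suc d. F d t u (1 / md n d) Z + F d t u (- 1 / md n d) Z) \<partial>gauss_mat n)"
  proof (intro nn_integral_cong)
    fix Z :: "nat \<times> nat \<Rightarrow> real"
    define a where "a d t u = exp ((1 / md n d) * (\<Sum>p\<in>Bk n (Suc d) t u. Z p))" for d t u
    define b where "b d t u = exp ((- 1 / md n d) * (\<Sum>p\<in>Bk n (Suc d) t u. Z p))" for d t u
    have "ennreal (\<Sum>d<D. \<Sum>t<2^Suc d. \<Sum>u<2^Suc d. a d t u + b d t u) = (\<Sum>d<D. ennreal (\<Sum>t<2^Suc d. \<Sum>u<2^Suc d. a d t u + b d t u))"
      by (intro sum_ennreal[symmetric] sum_nonneg add_nonneg_nonneg) (auto simp: a_def b_def)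
    also have "\<dots> = (\<Sum>d<D. \<Sum>t<2^Suc d. ennreal (\<Sum>u<2^Suc d. a d t u + b d t u))"
      by (intro sum.cong refl sum_ennreal[symmetric] sum_nonneg add_nonneg_nonneg) (auto simp: a_def b_def)
    also have "\<dots> = (\<Sum>d<D. \<Sum>t<2^Suc d. \<Sum>u<2^Suc d. ennreal (a d t u + b d t u))"
      by (intro sum.cong refl sum_ennreal[symmetric] sum_nonneg add_nonneg_nonneg) (auto simp: a_def b_def)
    also have "\<dots> = (\<Sum>d<D. \<Sum>t<2^Suc d. \<Sum>u<2^Suc d. F d t u (1 / md n d) Z + F d t u (- 1 / md n d) Z)"
      by (intro sum.cong refl) (simp add: a_def b_def F_def)
    finally show "ennreal (\<Sum>d<D. \<Sum>t<2^Suc d. \<Sum>u<2^Suc d.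
        exp ((1 / md n d) * (\<Sum>p\<in>Bk n (Suc d) t u. Z p)) + exp ((- 1 / md n d) * (\<Sum>p\<in>Bk n (Suc d) t u. Z p)))
      = (\<Sum>d<D. \<Sum>t<2^Suc d. \<Sum>u<2^Suc d. F d t u (1 / md n d) Z + F d t u (- 1 / md n d) Z)"
      unfolding a_def b_def .
  qed
  also have "\<dots> = (\<Sum>d<D. \<Sum>t<2^Suc d. \<Sum>u<2^Suc d. integral\<^sup>N (gauss_mat n) (F d t u (1 / md n d)) + integral\<^sup>N (gauss_mat n) (F d t u (- 1 / md n d)))"
  proof -
    have m2: "(\<lambda>Z. F d t u (1 / md n d) Z + F d t u (- 1 / md n d) Z) \<in> borel_measurable (gauss_mat n)"
      if "t < 2^Suc d" "u < 2^Suc d" for d t u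
      using meas[OF that] by (intro borel_measurable_add) auto
    have m1: "(\<lambda>Z. \<Sum>u<2^Suc d. F d t u (1 / md n d) Z + F d t u (- 1 / md n d) Z) \<in> borel_measurable (gauss_mat n)"
      if "t < 2^Suc d" for d t
      using m2[OF that] by (intro borel_measurable_sum) auto
    have m0: "(\<lambda>Z. \<Sum>t<2^Suc d. \<Sum>u<2^Suc d. F d t u (1 / md n d) Z + F d t u (- 1 / md n d) Z) \<in> borel_measurable (gauss_mat n)" for d
      by (rule borel_measurable_sum, rule m1) auto
    have "(\<integral>\<^sup>+Z. (\<Sum>d<D. \<Sum>t<2^Suc d. \<Sum>u<2^Suc d. F d t u (1 / md n d) Z + F d t u (- 1 / md n d) Z) \<partial>gauss_mat n)
        = (\<Sum>d<D. \<integral>\<^sup>+Z. (\<Sum>t<2^Suc d. \<Sum>u<2^Suc d. F d t u (1 / md n d) Z + F d t u (- 1 / md n d) Z) \<partial>gauss_mat n)"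
      by (rule nn_integral_sum) (rule m0)
    also have "\<dots> = (\<Sum>d<D. \<Sum>t<2^Suc d. \<integral>\<^sup>+Z. (\<Sum>u<2^Suc d. F d t u (1 / md n d) Z + F d t u (- 1 / md n d) Z) \<partial>gauss_mat n)"
      by (intro sum.cong refl nn_integral_sum m1) auto
    also have "\<dots> = (\<Sum>d<D. \<Sum>t<2^Suc d. \<Sum>u<2^Suc d. \<integral>\<^sup>+Z. (F d t u (1 / md n d) Z + F d t u (- 1 / md n d) Z) \<partial>gauss_mat n)"
      by (intro sum.cong refl nn_integral_sum m2) auto
    also have "\<dots> = (\<Sum>d<D. \<Sum>t<2^Suc d. \<Sum>u<2^Suc d. integral\<^sup>N (gauss_mat n) (F d t u (1 / md n d)) + integral\<^sup>N (gauss_mat n) (F d t u (- 1 / md n d)))"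
      by (intro sum.cong refl nn_integral_add meas) auto
    finally show ?thesis .
  qed
  also have "\<dots> \<le> (\<Sum>d<D. \<Sum>t<(2::nat)^Suc d. \<Sum>u<(2::nat)^Suc d. ennreal (exp 2) + ennreal (exp 2))"
    by (intro sum_mono add_mono one) (auto simp: power_divide)
  also have "\<dots> = ennreal (\<Sum>d<D. \<Sum>t<(2::nat)^Suc d. \<Sum>u<(2::nat)^Suc d. 2 * exp 2)"
  proof -
    have e: "ennreal (exp 2) + ennreal (exp 2) = ennreal (2 * exp 2)" by (subst ennreal_plus[symmetric]) auto
    have "ennreal (\<Sum>d<D. \<Sum>t<(2::nat)^Suc d. \<Sum>u<(2::nat)^Suc d. 2 * exp 2) = (\<Sum>d<D. ennreal (\<Sum>t<(2::nat)^Suc d. \<Sum>u<(2::nat)^Suc d. 2 * exp 2))"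
      by (intro sum_ennreal[symmetric] sum_nonneg) auto
    also have "\<dots> = (\<Sum>d<D. \<Sum>t<(2::nat)^Suc d. ennreal (\<Sum>u<(2::nat)^Suc d. 2 * exp 2))"
      by (intro sum.cong refl sum_ennreal[symmetric] sum_nonneg) auto
    also have "\<dots> = (\<Sum>d<D. \<Sum>t<(2::nat)^Suc d. \<Sum>u<(2::nat)^Suc d. ennreal (2 * exp 2))"
      by (intro sum.cong refl sum_ennreal[symmetric]) auto
    finally show ?thesis unfolding e by simp
  qed
  also have "\<dots> \<le> ennreal (2 * exp 2 * real D * 4^D)"
  proof (intro ennreal_leI)
    have "(\<Sum>d<D. \<Sum>t<(2::nat)^Suc d. \<Sum>u<(2::nat)^Suc d. 2 * exp (2::real)) = (\<Sum>d<D. (2 * exp 2) * (4::real)^Suc d)"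
    proof (intro sum.cong refl)
      fix d
      have "real (2^Suc d * 2^Suc d) = (4::real)^Suc d"
        by (simp add: power_mult_distrib[symmetric])
      then show "(\<Sum>t<(2::nat)^Suc d. \<Sum>u<(2::nat)^Suc d. 2 * exp (2::real)) = (2 * exp 2) * (4::real)^Suc d"
        by (simp del: of_nat_mult add: of_nat_mult[symmetric] mult.commute)
    qed
    also have "\<dots> \<le> (\<Sum>d<D. (2 * exp 2) * (4::real)^D)"
      by (intro sum_mono mult_left_mono power_increasing) auto
    also have "\<dots> = 2 * exp 2 * real D * 4^D" by simp
    finally show "(\<Sum>d<D. \<Sum>t<(2::nat)^Suc d. \<Sum>u<(2::nat)^Suc d. 2 * exp (2::real)) \<le> 2 * exp 2 * real D * 4^D" .
  qed
  finally show ?thesis .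
qed


theorem lemma4p5:
  "\<exists>C>0. \<forall>(n::nat) (V::real). n \<ge> 2 \<longrightarrow> V > 0 \<longrightarrow>
     GW n (K0 n V) \<le> ennreal (C * (V * ln (real n) * ln (1 + 2 * V * (real n)^2) + 1))"
proof (intro exI[of _ 216] conjI allI impI)
  fix n :: nat and V :: real
  assume n: "n \<ge> 2" and V: "V > 0"
  obtain D where D1: "1 \<le> D" and Dn: "n \<le> 2^D" and D2: "2^D < 2*n" using exD[OF n] by auto
  define X where "X d t u Z = (\<Sum>p\<in>Bk n (Suc d) t u. Z p)" for d t u and Z :: "nat \<times> nat \<Rightarrow> real"
  define S where "S Z = (\<Sum>d<D. \<Sum>t<(2::nat)^Suc d. \<Sum>u<(2::nat)^Suc d.
        exp ((1 / md n d) * (\<Sum>p\<in>Bk n (Suc d) t u. Z p)) + exp ((- 1 / md n d) * (\<Sum>p\<in>Bk n (Suc d) t u. Z p)))" for Z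
  define a where "a = 2 * exp 2 * real D * 4^D"
  have apos: "a \<ge> 2 * exp 2"
  proof -
    have h1: "(1::real) \<le> real D" using D1 by simp
    have h2: "(1::real) \<le> 4^D" by (simp add: one_le_power)
    have "(1::real) \<le> real D * 4^D" using mult_mono[OF h1 h2] by simp
    then show ?thesis unfolding a_def using mult_left_mono[of 1 "real D * 4^D" "2 * exp 2"] by (simp add: mult.assoc)
  qed
  have a0: "a > 0" using apos exp_gt_zero[of 2] by linarith
  have lna: "ln a \<ge> 1"
  proof -
    have "exp 1 \<le> exp (2::real)" by simp
    then have "exp 1 \<le> a" using apos exp_gt_zero[of 2] by linarith
    then have "ln (exp 1) \<le> ln a" using a0 by (subst ln_le_cancel_iff) auto
    then show ?thesis by simp
  qed
  have Sge: "exp (\<bar>X d t u Z\<bar> / md n d) \<le> S Z" if "d < D" "t < 2^Suc d" "u < 2^Suc d" for d t u Z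
  proof -
    let ?x = "X d t u Z" and ?m = "md n d"
    have m: "?m > 0" by (rule md_pos)
    have "exp (\<bar>?x\<bar> / ?m) \<le> exp ((1 / ?m) * ?x) + exp ((- 1 / ?m) * ?x)"
    proof (cases "?x \<ge> 0")
      case True then show ?thesis by (simp add: add_increasing2)
    next
      case False then show ?thesis by (simp add: add_increasing)
    qed
    also have "\<dots> \<le> S Z"
    proof -
      define g where "g d t u = exp ((1 / md n d) * X d t u Z) + exp ((- 1 / md n d) * X d t u Z)" for d t u
      have gn: "g d t u \<ge> 0" for d t u unfolding g_def by (intro add_nonneg_nonneg) auto
      have "g d t u \<le> (\<Sum>u<(2::nat)^Suc d. g d t u)" using that by (intro member_le_sum gn) auto
      also have "\<dots> \<le> (\<Sum>t<(2::nat)^Suc d. \<Sum>u<(2::nat)^Suc d. g d t u)"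
        using that by (intro member_le_sum[where f="\<lambda>t. \<Sum>u<(2::nat)^Suc d. g d t u"] sum_nonneg gn) auto
      also have "\<dots> \<le> (\<Sum>d<D. \<Sum>t<(2::nat)^Suc d. \<Sum>u<(2::nat)^Suc d. g d t u)"
        using that by (intro member_le_sum[where f="\<lambda>d. \<Sum>t<(2::nat)^Suc d. \<Sum>u<(2::nat)^Suc d. g d t u"] sum_nonneg gn) auto
      finally show ?thesis unfolding g_def S_def X_def .
    qed
    finally show ?thesis .
  qed
  have Xb: "\<bar>X d t u Z\<bar> / md n d \<le> ln (S Z)" if "d < D" "t < 2^Suc d" "u < 2^Suc d" for d t u Z
  proof -
    have sp: "0 < S Z" using Sge[OF that, of Z] exp_gt_zero[of "\<bar>X d t u Z\<bar> / md n d"] by linarith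
    have "ln (exp (\<bar>X d t u Z\<bar> / md n d)) \<le> ln (S Z)"
      using Sge[OF that, of Z] sp by (subst ln_le_cancel_iff) auto
    then show ?thesis by simp
  qed
  have Spos: "S Z > 0" for Z
  proof -
    have "exp (\<bar>X 0 0 0 Z\<bar> / md n 0) \<le> S Z" using D1 by (intro Sge) auto
    then show ?thesis using exp_gt_zero[of "\<bar>X 0 0 0 Z\<bar> / md n 0"] by linarith
  qed
  have measS: "(\<lambda>Z. S Z) \<in> borel_measurable (gauss_mat n)"
  proof -
    have m2: "(\<lambda>Z. exp ((1 / md n d) * (\<Sum>p\<in>Bk n (Suc d) t u. Z p)) + exp ((- 1 / md n d) * (\<Sum>p\<in>Bk n (Suc d) t u. Z p))) \<in> borel_measurable (gauss_mat n)"
      if "t < 2^Suc d" "u < 2^Suc d" for d t u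
      by (intro borel_measurable_add meas_blocksum Bk_sub_grid that)
    have m1: "(\<lambda>Z. \<Sum>u<(2::nat)^Suc d. exp ((1 / md n d) * (\<Sum>p\<in>Bk n (Suc d) t u. Z p)) + exp ((- 1 / md n d) * (\<Sum>p\<in>Bk n (Suc d) t u. Z p))) \<in> borel_measurable (gauss_mat n)"
      if "t < 2^Suc d" for d t
      by (rule borel_measurable_sum, rule m2) (use that in auto)
    have m0: "(\<lambda>Z. \<Sum>t<(2::nat)^Suc d. \<Sum>u<(2::nat)^Suc d. exp ((1 / md n d) * (\<Sum>p\<in>Bk n (Suc d) t u. Z p)) + exp ((- 1 / md n d) * (\<Sum>p\<in>Bk n (Suc d) t u. Z p))) \<in> borel_measurable (gauss_mat n)" for d
      by (rule borel_measurable_sum, rule m1) auto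
    show ?thesis unfolding S_def by (rule borel_measurable_sum, rule m0)
  qed
  interpret G: prob_space "gauss_mat n"
    unfolding gauss_mat_def by (intro prob_space_PiM) (simp add: prob_space_normal_density)
  define k1 where "k1 = 4 * real D * V / a"
  define k2 where "k2 = 4 * real D * V * (ln a - 1)"
  have k1: "k1 \<ge> 0" unfolding k1_def using V a0 by simp
  have k2: "k2 \<ge> 0" unfolding k2_def using V lna by simp
  have pw: "inner_mat n Z \<theta> \<le> k1 * S Z + k2" if th: "\<theta> \<in> K0 n V" for Z \<theta>
  proof -
    have TV: "TV n \<theta> \<le> V" and mean: "mean n \<theta> = 0" using th by (auto simp: K0_def)
    have lnS: "0 \<le> ln (S Z)" using Xb[of 0 0 0 Z] D1 md_pos[of n 0] by (smt (verit) divide_nonneg_pos abs_ge_zero One_nat_def Suc_le_eq zero_less_numeral zero_less_power)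
    have "inner_mat n Z \<theta> \<le> 4 * real D * ln (S Z) * TV n \<theta>"
      by (rule det_main[OF Dn mean]) (use Xb in \<open>auto simp: X_def\<close>)
    also have "\<dots> \<le> 4 * real D * ln (S Z) * V"
      using TV lnS by (intro mult_left_mono) auto
    also have "\<dots> \<le> 4 * real D * V * (S Z / a + ln a - 1)"
    proof -
      have "ln (S Z / a) \<le> S Z / a - 1" using Spos[of Z] a0 by (intro ln_le_minus_one) simp
      then have "ln (S Z) \<le> S Z / a + ln a - 1" using Spos[of Z] a0 by (simp add: ln_div)
      then show ?thesis using V by (simp add: mult_left_mono mult.commute mult.left_commute)
    qed
    also have "\<dots> = k1 * S Z + k2" unfolding k1_def k2_def using a0 by (simp add: field_simps)
    finally show ?thesis .
  qed
  have "GW n (K0 n V) \<le> (\<integral>\<^sup>+ Z. ennreal k1 * ennreal (S Z) + ennreal k2 \<partial>gauss_mat n)"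
    unfolding GW_def
  proof (rule nn_integral_mono)
    fix Z
    show "(SUP v\<in>K0 n V. ennreal (inner_mat n Z v)) \<le> ennreal k1 * ennreal (S Z) + ennreal k2"
    proof (rule SUP_least)
      fix \<theta> assume "\<theta> \<in> K0 n V"
      then have "ennreal (inner_mat n Z \<theta>) \<le> ennreal (k1 * S Z + k2)" by (intro ennreal_leI pw)
      also have "\<dots> = ennreal k1 * ennreal (S Z) + ennreal k2"
        using k1 k2 Spos[of Z] by (simp add: ennreal_plus ennreal_mult)
      finally show "ennreal (inner_mat n Z \<theta>) \<le> ennreal k1 * ennreal (S Z) + ennreal k2" .
    qed
  qed
  also have "\<dots> = ennreal k1 * (\<integral>\<^sup>+ Z. ennreal (S Z) \<partial>gauss_mat n) + ennreal k2"
    using measS by (simp add: nn_integral_add nn_integral_cmult G.emeasure_space_1)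
  also have "\<dots> \<le> ennreal k1 * ennreal a + ennreal k2"
    using ES_bound[where D=D and n=n] unfolding S_def a_def by (intro add_mono mult_left_mono) auto
  also have "\<dots> = ennreal (4 * real D * V * ln a)"
    using k1 k2 a0 by (simp add: ennreal_plus[symmetric] ennreal_mult[symmetric] k1_def k2_def field_simps del: ennreal_plus)
  also have "\<dots> \<le> ennreal (216 * (V * ln (real n) * ln (1 + 2 * V * (real n)^2) + 1))"
  proof (rule ennreal_leI)
    have lnD: "ln (real D) \<le> real D - 1" using D1 by (intro ln_le_minus_one) simp
    have ln2: "ln (2::real) \<le> 1" using ln_le_minus_one[of 2] by simp
    have ln4: "ln (4::real) \<le> 3" using ln_le_minus_one[of 4] by simp
    have "ln a = ln 2 + 2 + ln (real D) + real D * ln 4"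
      unfolding a_def using D1 by (simp add: ln_mult ln_realpow)
    also have "\<dots> \<le> 1 + 2 + (real D - 1) + real D * 3"
      using ln2 lnD ln4 by (intro add_mono mult_left_mono) auto
    finally have la: "ln a \<le> 6 * real D" using D1 by simp
    have "4 * real D * V * ln a \<le> 4 * real D * V * (6 * real D)"
      using la V by (intro mult_left_mono) auto
    also have "\<dots> = 24 * V * (real D)^2" by (simp add: power2_eq_square)
    also have "\<dots> \<le> 24 * V * (3 * ln (real n))^2"
      using D_bound[OF n D2] V by (intro mult_left_mono power_mono) auto
    also have "\<dots> = 216 * (V * ln (real n)^2)" by (simp add: power2_eq_square)
    also have "\<dots> \<le> 216 * (V * ln (real n) * ln (1 + 2 * V * (real n)^2) + 1)"
      using final_arith[OF n V] by simp
    finally show "4 * real D * V * ln a \<le> 216 * (V * ln (real n) * ln (1 + 2 * V * (real n)^2) + 1)" .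
  qed
  finally show "GW n (K0 n V) \<le> ennreal (216 * (V * ln (real n) * ln (1 + 2 * V * (real n)^2) + 1))" .
qed simp


end
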